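(* Fix constants $\alpha>0$, $\beta>0$, $\theta>0$ and $\gamma_P>2$. Let $f(n):=n^{2/3}\ln^{1/3}n$, $s:=\min\{\lceil\alpha f(n)\rceil,n-1\}$ and $g:=(\beta s\ln(\theta s))^{1/2}$. Suppose $s<n-1$ and $1<\theta s\le n$. Let $c_{nk}$ be the number of comparisons made by the nonrecursive SELECT on an input list of size $n$ with rank $k$, and set $$\hat\gamma_P:=(4\gamma_P+2)(\beta/\alpha)^{1/2}+(2\gamma_P-1)\big[\alpha+1/f(n)\big].$$ Then $$\mathrm{P}\big[c_{nk}\le n+\min\{k,n-k\}+\hat\gamma_P f(n)\big]\ge1-4(\alpha\theta)^{-2\beta}n^{-4\beta/3}\ln^{-2\beta/3}n.$$ Moreover, if $\beta\ge1/4$, then $$\mathrm{E}\,c_{nk}\le n+\min\{k,n-k\}+\big(\hat\gamma_P+(4\gamma_P+2)(\alpha\theta)^{-2\beta}\big)f(n).$$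
   Context: Nonrecursive SELECT. The input is a list $X=(x_1,\dots,x_n)$ of elements of a totally ordered set (repeated values allowed) and an integer $1\le k\le n$. Let $\mathcal R$ be a deterministic routine that finds the $i$th smallest of any $m$ elements using at most $\gamma_P m$ comparisons. 1. Choose a set $I$ of $s$ positions uniformly at random among all $s$-subsets of $\{1,\dots,n\}$. The sample is $S=(x_j)_{j\in I}$ with sorted elements $y_1^*\le\dots\le y_s^*$. 2. Set $i_u:=\max\{\lceil ks/n-g\rceil,1\}$ and $i_v:=\min\{\lceil ks/n+g\rceil,s\}$. Compute $u:=y_{i_u}^*$ and $v:=y_{i_v}^*$ using $\mathcal R$ at most twice on at most $s$ elements, so this step uses at most $2\gamma_P s$ comparisons. 3. Partition. Each $x_j$ with $j\notin I$ is compared with the pivots. - If $k<n/2$: $x_j$ is compared with $v$ first, and with $u$ only if $x_j<v$ and $u<v$. - If $k\ge n/2$: $x_j$ is compared with $u$ first, and with $v$ only if $x_j>u$ and $u<v$. Sample elements are not compared. Hence this step uses $c$ comparisons, where $c=n-s$ if $u=v$, $c=(n-s)+|\{j\notin I:x_j<v\}|$ if $u<v$ and $k<n/2$, and $c=(n-s)+|\{j\notin I:x_j>u\}|$ if $u<v$ and $k\ge n/2$. 4. Let $L=\{x<u\}$, $U=\{x=u\}$, $M=\{u<x<v\}$ and $R=\{x>v\}$. - If $|L|<k\le|L\cup U|$, return $u$; if $|L\cup U\cup M|<k\le n-|R|$, return $v$. In either case set $\hat n:=0$. - Otherwise let $\hat X$ be $L$ if $k\le|L|$, else $R$ if $n-|R|<k$,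 else $M$. Let $\hat n:=|\hat X|$ and find the answer in $\hat X$ with $\mathcal R$, using at most $\gamma_P\hat n$ comparisons. The total count $c_{nk}$ consists of the comparisons in steps 2, 3 and 4, so $c_{nk}\le 2\gamma_P s+c+\gamma_P\hat n$. $\mathrm{P}$ and $\mathrm{E}$ are with respect to the random sample. *)

theory Defs
  imports "HOL-Probability.Probability"
begin

text \<open>Positions are 0-based: the input list X has positions 0..<n.\<close>

definition fsel :: "nat \<Rightarrow> real" where
  "fsel n = real n powr (2/3) * ln (real n) powr (1/3)"

definition s_size :: "real \<Rightarrow> nat \<Rightarrow> nat" where
  "s_size \<alpha> n = min (nat \<lceil>\<alpha> * fsel n\<rceil>) (n - 1)"

definition g_gap :: "real \<Rightarrow> real \<Rightarrow> nat \<Rightarrow> real" where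
  "g_gap \<beta> \<theta> s = sqrt (\<beta> * real s * ln (\<theta> * real s))"

text \<open>Sorted sample y*_1 <= ... <= y*_s (as a 0-indexed list).\<close>
definition sorted_sample :: "'a::linorder list \<Rightarrow> nat set \<Rightarrow> 'a list" where
  "sorted_sample X I = sort (map (\<lambda>j. X ! j) (sorted_list_of_set I))"

definition sample_list :: "'a::linorder list \<Rightarrow> nat set \<Rightarrow> 'a list" where
  "sample_list X I = map (\<lambda>j. X ! j) (sorted_list_of_set I)"

definition i_u :: "nat \<Rightarrow> nat \<Rightarrow> nat \<Rightarrow> real \<Rightarrow> nat" where
  "i_u n k s g = nat (max \<lceil>real k * real s / real n - g\<rceil> 1)"

definition i_v :: "nat \<Rightarrow> nat \<Rightarrow> nat \<Rightarrow> real \<Rightarrow> nat" where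
  "i_v n k s g = min (nat \<lceil>real k * real s / real n + g\<rceil>) s"

definition pivot_u :: "'a::linorder list \<Rightarrow> nat set \<Rightarrow> nat \<Rightarrow> real \<Rightarrow> nat \<Rightarrow> 'a" where
  "pivot_u X I k g s = sorted_sample X I ! (i_u (length X) k s g - 1)"

definition pivot_v :: "'a::linorder list \<Rightarrow> nat set \<Rightarrow> nat \<Rightarrow> real \<Rightarrow> nat \<Rightarrow> 'a" where
  "pivot_v X I k g s = sorted_sample X I ! (i_v (length X) k s g - 1)"

text \<open>Step 2: R is applied to the sample to find y*_{i_u} and y*_{i_v}.
  R_cost xs i is the number of comparisons R uses to find the i-th smallest of xs.\<close>
definition step2_cost :: "('a::linorder list \<Rightarrow> nat \<Rightarrow> nat) \<Rightarrow> 'a list \<Rightarrow> nat set \<Rightarrow> nat \<Rightarrow> real \<Rightarrow> nat \<Rightarrow> nat" where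
  "step2_cost R_cost X I k g s =
     R_cost (sample_list X I) (i_u (length X) k s g) + R_cost (sample_list X I) (i_v (length X) k s g)"

definition step3_cost :: "'a::linorder list \<Rightarrow> nat set \<Rightarrow> nat \<Rightarrow> real \<Rightarrow> nat \<Rightarrow> nat" where
  "step3_cost X I k g s =
    (let n = length X; u = pivot_u X I k g s; v = pivot_v X I k g s in
     (n - s) + (if u < v then
                  (if 2 * k < n then card {j. j < n \<and> j \<notin> I \<and> X ! j < v}
                   else card {j. j < n \<and> j \<notin> I \<and> u < X ! j})
                else 0))"

text \<open>Step 4: the answer is u, v, or is found in L, R or M by R.\<close>
definition step4_cost :: "('a::linorder list \<Rightarrow> nat \<Rightarrow> nat) \<Rightarrow> 'a list \<Rightarrow> nat set \<Rightarrow> nat \<Rightarrow> real \<Rightarrow> nat \<Rightarrow> nat" where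
  "step4_cost R_cost X I k g s =
    (let n = length X; u = pivot_u X I k g s; v = pivot_v X I k g s;
         nL = length (filter (\<lambda>x. x < u) X);
         nLU = length (filter (\<lambda>x. x \<le> u) X);
         nLUM = length (filter (\<lambda>x. x < v \<or> x \<le> u) X);
         nR = length (filter (\<lambda>x. v < x) X) in
     if (nL < k \<and> k \<le> nLU) \<or> (nLUM < k \<and> k \<le> n - nR) then 0
     else if k \<le> nL then R_cost (filter (\<lambda>x. x < u) X) k
     else if n - nR < k then R_cost (filter (\<lambda>x. v < x) X) (k - (n - nR))
     else R_cost (filter (\<lambda>x. u < x \<and> x < v) X) (k - nLU))"

definition c_nk :: "('a::linorder list \<Rightarrow> nat \<Rightarrow> nat) \<Rightarrow> real \<Rightarrow> real \<Rightarrow> real \<Rightarrow> 'a list \<Rightarrow> nat \<Rightarrow> nat set \<Rightarrow> nat" where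
  "c_nk R_cost \<alpha> \<beta> \<theta> X k I =
    (let s = s_size \<alpha> (length X); g = g_gap \<beta> \<theta> s in
     step2_cost R_cost X I k g s + step3_cost X I k g s + step4_cost R_cost X I k g s)"

definition sample_pmf :: "nat \<Rightarrow> nat \<Rightarrow> nat set pmf" where
  "sample_pmf n s = pmf_of_set {I. I \<subseteq> {..<n} \<and> card I = s}"

definition gamma_hat :: "real \<Rightarrow> real \<Rightarrow> real \<Rightarrow> nat \<Rightarrow> real" where
  "gamma_hat \<gamma>P \<alpha> \<beta> n = (4 * \<gamma>P + 2) * sqrt (\<beta> / \<alpha>) + (2 * \<gamma>P - 1) * (\<alpha> + 1 / fsel n)"

end

theory Submission
  imports Defs
begin
definition SS :: "nat \<Rightarrow> nat \<Rightarrow> nat set set" where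
  "SS n s = {I. I \<subseteq> {..<n} \<and> card I = s}"

lemma SS_finite: "finite (SS n s)"
  unfolding SS_def by (rule finite_subset[of _ "Pow {..<n}"]) auto

lemma SS_card: "card (SS n s) = n choose s"
  unfolding SS_def using n_subsets[of "{..<n}" s] by simp

lemma SS_nonempty: "s \<le> n \<Longrightarrow> SS n s \<noteq> {}"
  using SS_card[of n s] by (metis binomial_eq_0_iff card.empty not_less)

lemma card_supersets:
  assumes K: "K \<subseteq> {..<n}" "card K = i" "i \<le> s"
  shows "card {I. I \<subseteq> {..<n} \<and> card I = s \<and> K \<subseteq> I} = (n - i) choose (s - i)"
proof -
  have fK: "finite K" using K(1) finite_subset by blast
  have "bij_betw (\<lambda>J. J \<union> K) {J. J \<subseteq> {..<n} - K \<and> card J = s - i} {I. I \<subseteq> {..<n} \<and> card I = s \<and> K \<subseteq> I}"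
  proof (rule bij_betwI[where g = "\<lambda>I. I - K"])
    show "(\<lambda>J. J \<union> K) \<in> {J. J \<subseteq> {..<n} - K \<and> card J = s - i} \<rightarrow> {I. I \<subseteq> {..<n} \<and> card I = s \<and> K \<subseteq> I}"
    proof
      fix J assume J: "J \<in> {J. J \<subseteq> {..<n} - K \<and> card J = s - i}"
      then have fJ: "finite J" using finite_subset[of J "{..<n}"] by auto
      have "card (J \<union> K) = card J + card K"
        using J fJ fK by (intro card_Un_disjoint) auto
      then show "J \<union> K \<in> {I. I \<subseteq> {..<n} \<and> card I = s \<and> K \<subseteq> I}" using J K by auto
    qed
    show "(\<lambda>I. I - K) \<in> {I. I \<subseteq> {..<n} \<and> card I = s \<and> K \<subseteq> I} \<rightarrow> {J. J \<subseteq> {..<n} - K \<and> card J = s - i}"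
    proof
      fix I assume I: "I \<in> {I. I \<subseteq> {..<n} \<and> card I = s \<and> K \<subseteq> I}"
      then have "card (I - K) = s - i" using K fK by (simp add: card_Diff_subset)
      then show "I - K \<in> {J. J \<subseteq> {..<n} - K \<and> card J = s - i}" using I by auto
    qed
  qed auto
  then have "card {I. I \<subseteq> {..<n} \<and> card I = s \<and> K \<subseteq> I} = card {J. J \<subseteq> {..<n} - K \<and> card J = s - i}"
    by (simp add: bij_betw_same_card)
  also have "\<dots> = card ({..<n} - K) choose (s - i)" by (rule n_subsets) auto
  also have "card ({..<n} - K) = n - i" using K fK by (simp add: card_Diff_subset)
  finally show ?thesis .
qed

lemma double_count:
  assumes A: "A \<subseteq> {..<n}" "card A = t" and i: "i \<le> s"
  shows "(\<Sum>I\<in>SS n s. card (I \<inter> A) choose i) = (t choose i) * ((n - i) choose (s - i))"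
proof -
  define KS where "KS = {K. K \<subseteq> A \<and> card K = i}"
  have fA: "finite A" using A finite_subset by blast
  have "KS \<subseteq> Pow A" unfolding KS_def by auto
  then have fKS: "finite KS" using fA finite_subset by blast
  have "(\<Sum>I\<in>SS n s. card (I \<inter> A) choose i) = (\<Sum>I\<in>SS n s. \<Sum>K\<in>KS. if K \<subseteq> I then 1 else 0)"
  proof (rule sum.cong[OF refl])
    fix I assume "I \<in> SS n s"
    have "finite (I \<inter> A)" using fA by simp
    then have "card (I \<inter> A) choose i = card {K. K \<subseteq> I \<inter> A \<and> card K = i}"
      by (rule n_subsets[symmetric])
    also have "{K. K \<subseteq> I \<inter> A \<and> card K = i} = {K\<in>KS. K \<subseteq> I}" unfolding KS_def by auto
    also have "card \<dots> = (\<Sum>K\<in>KS. if K \<subseteq> I then 1 else 0)"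
      using fKS by (simp add: sum.inter_filter[symmetric])
    finally show "card (I \<inter> A) choose i = (\<Sum>K\<in>KS. if K \<subseteq> I then 1 else 0)" .
  qed
  also have "\<dots> = (\<Sum>K\<in>KS. \<Sum>I\<in>SS n s. if K \<subseteq> I then 1 else 0)" by (rule sum.swap)
  also have "\<dots> = (\<Sum>K\<in>KS. (n - i) choose (s - i))"
  proof (rule sum.cong[OF refl])
    fix K assume K: "K \<in> KS"
    have "(\<Sum>I\<in>SS n s. if K \<subseteq> I then 1 else 0) = card {I\<in>SS n s. K \<subseteq> I}"
      using SS_finite by (simp add: sum.inter_filter[symmetric])
    also have "{I\<in>SS n s. K \<subseteq> I} = {I. I \<subseteq> {..<n} \<and> card I = s \<and> K \<subseteq> I}" unfolding SS_def by auto
    also have "card \<dots> = (n - i) choose (s - i)"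
      using K A i unfolding KS_def by (intro card_supersets) auto
    finally show "(\<Sum>I\<in>SS n s. if K \<subseteq> I then 1 else 0) = (n - i) choose (s - i)" .
  qed
  also have "\<dots> = card KS * ((n - i) choose (s - i))" by simp
  also have "card KS = t choose i" unfolding KS_def using n_subsets[OF fA] A by simp
  finally show ?thesis .
qed

lemma choose_ratio:
  assumes "t \<le> n"
  shows "real (t choose i) * real n ^ i \<le> real (n choose i) * real t ^ i"
  using assms
proof (induction i arbitrary: t n)
  case 0 then show ?case by simp
next
  case (Suc i)
  show ?case
  proof (cases t)
    case 0 then show ?thesis by simp
  next
    case (Suc t')
    then obtain n' where n: "n = Suc n'" using Suc.prems by (cases n) auto
    have t'n': "t' \<le> n'" using Suc.prems n \<open>t = Suc t'\<close> by simp
    have IH: "real (t' choose i) * real n' ^ i \<le> real (n' choose i) * real t' ^ i"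
      using Suc.IH[OF t'n'] .
    have ct: "real (Suc i) * real (t choose Suc i) = real t * real (t' choose i)"
      using Suc_times_binomial[of i t'] \<open>t = Suc t'\<close> by (metis of_nat_mult)
    have cn: "real (Suc i) * real (n choose Suc i) = real n * real (n' choose i)"
      using Suc_times_binomial[of i n'] n by (metis of_nat_mult)
    have key: "real (t' choose i) * real n ^ i \<le> real (n' choose i) * real t ^ i"
    proof (cases "n' = 0")
      case True
      then have "t' = 0" using t'n' by simp
      then show ?thesis using True n \<open>t = Suc t'\<close> by simp
    next
      case False
      have mono: "real t' * real n \<le> real n' * real t"
        using t'n' n \<open>t = Suc t'\<close> by (simp add: algebra_simps)
      have "real (t' choose i) * real n ^ i * real n' ^ i = (real (t' choose i) * real n' ^ i) * real n ^ i"
        by simp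
      also have "\<dots> \<le> (real (n' choose i) * real t' ^ i) * real n ^ i"
        using IH by (intro mult_right_mono) auto
      also have "\<dots> = real (n' choose i) * (real t' * real n) ^ i" by (simp add: power_mult_distrib)
      also have "\<dots> \<le> real (n' choose i) * (real n' * real t) ^ i"
        by (intro mult_left_mono power_mono mono) auto
      also have "\<dots> = real (n' choose i) * real t ^ i * real n' ^ i" by (simp add: power_mult_distrib)
      finally show ?thesis using False by (simp add: mult_le_cancel_right)
    qed
    have "real (Suc i) * (real (t choose Suc i) * real n ^ Suc i) = real n * real n ^ i * (real (Suc i) * real (t choose Suc i))"
      by (simp add: algebra_simps)
    also have "\<dots> = real t * real n * (real (t' choose i) * real n ^ i)"
      unfolding ct by (simp add: algebra_simps)
    also have "\<dots> \<le> real t * real n * (real (n' choose i) * real t ^ i)"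
      using key by (intro mult_left_mono) auto
    also have "\<dots> = real t * real t ^ i * (real n * real (n' choose i))"
      by (simp add: algebra_simps)
    also have "\<dots> = real t * real t ^ i * (real (Suc i) * real (n choose Suc i))"
      unfolding cn ..
    also have "\<dots> = real (Suc i) * (real (n choose Suc i) * real t ^ Suc i)"
      by (simp add: algebra_simps)
    finally show ?thesis by (simp only: mult_le_cancel_left)
  qed
qed

lemma mgf_bound:
  assumes A: "A \<subseteq> {..<n}" "card A = t" and sn: "s \<le> n" and x: "x \<ge> (1::real)"
  shows "(\<Sum>I\<in>SS n s. x ^ card (I \<inter> A)) \<le> real (card (SS n s)) * (1 + (real t / real n) * (x - 1)) ^ s"
proof -
  have tn: "t \<le> n" using A card_mono[OF _ A(1)] by auto
  have H: "card (I \<inter> A) \<le> s" if "I \<in> SS n s" for I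
    using that unfolding SS_def by (auto intro: card_mono finite_subset[of _ "{..<n}"])
  have "(\<Sum>I\<in>SS n s. x ^ card (I \<inter> A)) = (\<Sum>I\<in>SS n s. \<Sum>i\<le>s. real (card (I \<inter> A) choose i) * (x - 1) ^ i)"
  proof (rule sum.cong[OF refl])
    fix I assume I: "I \<in> SS n s"
    have "x ^ card (I \<inter> A) = ((x - 1) + 1) ^ card (I \<inter> A)" by simp
    also have "\<dots> = (\<Sum>i\<le>card (I \<inter> A). real (card (I \<inter> A) choose i) * (x - 1) ^ i)"
      by (subst binomial_ring) simp
    also have "\<dots> = (\<Sum>i\<le>s. real (card (I \<inter> A) choose i) * (x - 1) ^ i)"
      using H[OF I] by (intro sum.mono_neutral_left) auto
    finally show "x ^ card (I \<inter> A) = (\<Sum>i\<le>s. real (card (I \<inter> A) choose i) * (x - 1) ^ i)" .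
  qed
  also have "\<dots> = (\<Sum>i\<le>s. (x - 1) ^ i * real (\<Sum>I\<in>SS n s. card (I \<inter> A) choose i))"
    by (subst sum.swap) (simp add: sum_distrib_left mult.commute)
  also have "\<dots> = (\<Sum>i\<le>s. (x - 1) ^ i * (real (t choose i) * real ((n - i) choose (s - i))))"
    by (intro sum.cong refl) (simp add: double_count[OF A])
  also have "\<dots> \<le> (\<Sum>i\<le>s. (x - 1) ^ i * (real (n choose s) * real (s choose i) * (real t / real n) ^ i))"
  proof (rule sum_mono)
    fix i assume "i \<in> {..s}"
    then have hi: "i \<le> s" by simp
    have cm: "real (n choose s) * real (s choose i) = real (n choose i) * real ((n - i) choose (s - i))"
      using choose_mult[OF hi sn] by (metis of_nat_mult)
    have "real (t choose i) \<le> real (n choose i) * (real t / real n) ^ i"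
    proof (cases "n = 0")
      case True then show ?thesis using tn by (cases i) auto
    next
      case False
      have "real (t choose i) * real n ^ i \<le> real (n choose i) * real t ^ i" by (rule choose_ratio[OF tn])
      then show ?thesis using False by (simp add: power_divide field_simps)
    qed
    then have "real (t choose i) * real ((n - i) choose (s - i)) \<le> real (n choose i) * (real t / real n) ^ i * real ((n - i) choose (s - i))"
      by (rule mult_right_mono) simp
    also have "\<dots> = real (n choose s) * real (s choose i) * (real t / real n) ^ i"
      unfolding cm by (simp add: algebra_simps)
    finally have "real (t choose i) * real ((n - i) choose (s - i)) \<le> real (n choose s) * real (s choose i) * (real t / real n) ^ i" .
    then show "(x - 1) ^ i * (real (t choose i) * real ((n - i) choose (s - i))) \<le> (x - 1) ^ i * (real (n choose s) * real (s choose i) * (real t / real n) ^ i)"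
      using x by (intro mult_left_mono) auto
  qed
  also have "\<dots> = real (n choose s) * (\<Sum>i\<le>s. real (s choose i) * ((real t / real n) * (x - 1)) ^ i * 1 ^ (s - i))"
    by (simp add: sum_distrib_left power_mult_distrib[symmetric] mult.assoc mult.left_commute mult.commute)
  also have "\<dots> = real (n choose s) * ((real t / real n) * (x - 1) + 1) ^ s"
    by (subst binomial_ring) simp
  finally show ?thesis by (simp add: SS_card add.commute)
qed

lemma tail_upper:
  assumes A: "A \<subseteq> {..<n}" "card A = t" and sn: "s \<le> n" and s0: "0 < s" and g: "g \<ge> 0"
  shows "real (card {I\<in>SS n s. real (card (I \<inter> A)) \<ge> real t * real s / real n + g})
          \<le> exp (- 2 * g\<^sup>2 / real s) * real (card (SS n s))"
proof -
  define l where "l = 4 * g / real s"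
  define p where "p = real t / real n"
  define E where "E = {I\<in>SS n s. real (card (I \<inter> A)) \<ge> real t * real s / real n + g}"
  have l0: "l \<ge> 0" unfolding l_def using g by simp
  have tn: "t \<le> n" using A card_mono[OF _ A(1)] by auto
  have p0: "p \<ge> 0" unfolding p_def by simp
  have fE: "finite E" unfolding E_def using SS_finite by simp
  have "real (card E) * exp (l * (p * real s + g)) = (\<Sum>I\<in>E. exp (l * (p * real s + g)))" by simp
  also have "\<dots> \<le> (\<Sum>I\<in>E. exp l ^ card (I \<inter> A))"
  proof (rule sum_mono)
    fix I assume "I \<in> E"
    then have "p * real s + g \<le> real (card (I \<inter> A))" unfolding E_def p_def by auto
    then have "exp (l * (p * real s + g)) \<le> exp (l * real (card (I \<inter> A)))"
      using l0 by (intro exp_le_cancel_iff[THEN iffD2] mult_left_mono) auto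
    then show "exp (l * (p * real s + g)) \<le> exp l ^ card (I \<inter> A)"
      by (simp add: exp_of_nat_mult[symmetric] mult.commute)
  qed
  also have "\<dots> \<le> (\<Sum>I\<in>SS n s. exp l ^ card (I \<inter> A))"
    using SS_finite by (intro sum_mono2) (auto simp: E_def)
  also have "\<dots> \<le> real (card (SS n s)) * (1 + p * (exp l - 1)) ^ s"
    unfolding p_def using l0 by (intro mgf_bound[OF A sn]) auto
  also have "\<dots> \<le> real (card (SS n s)) * exp (real s * (l * p + l\<^sup>2 / 8))"
  proof (rule mult_left_mono)
    have "1 + p * (exp l - 1) > 0" using p0 l0 by (intro add_pos_nonneg mult_nonneg_nonneg) auto
    then have "(1 + p * (exp l - 1)) ^ s = exp (real s * ln (1 + p * (exp l - 1)))"
      by (simp add: exp_of_nat_mult)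
    also have "\<dots> \<le> exp (real s * (l * p + l\<^sup>2 / 8))"
    proof -
      have "- l * p + ln (1 + p * (exp l - 1)) \<le> l\<^sup>2 / 8"
        using Hoeffdings_lemma_aux[OF l0 p0] by simp
      then show ?thesis by (intro exp_le_cancel_iff[THEN iffD2] mult_left_mono) auto
    qed
    finally show "(1 + p * (exp l - 1)) ^ s \<le> exp (real s * (l * p + l\<^sup>2 / 8))" .
  qed simp
  finally have "real (card E) * exp (l * (p * real s + g)) \<le> real (card (SS n s)) * exp (real s * (l * p + l\<^sup>2 / 8))" .
  then have "real (card E) \<le> real (card (SS n s)) * exp (real s * (l * p + l\<^sup>2 / 8)) / exp (l * (p * real s + g))"
    by (simp add: field_simps)
  also have "\<dots> = real (card (SS n s)) * exp (real s * (l * p + l\<^sup>2 / 8) - l * (p * real s + g))"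
    by (simp add: exp_diff)
  also have "real s * (l * p + l\<^sup>2 / 8) - l * (p * real s + g) = - 2 * g\<^sup>2 / real s"
    unfolding l_def using s0 by (simp add: field_simps power2_eq_square)
  finally show ?thesis unfolding E_def p_def by (simp add: mult.commute)
qed

lemma tail_lower:
  assumes A: "A \<subseteq> {..<n}" "card A = t" and sn: "s \<le> n" and s0: "0 < s" and g: "g \<ge> 0"
  shows "real (card {I\<in>SS n s. real (card (I \<inter> A)) \<le> real t * real s / real n - g})
          \<le> exp (- 2 * g\<^sup>2 / real s) * real (card (SS n s))"
proof -
  have tn: "t \<le> n" using A card_mono[OF _ A(1)] by auto
  have n0: "n > 0" using sn s0 by simp
  have cB: "card ({..<n} - A) = n - t" using A by (simp add: card_Diff_subset finite_subset)
  have "{I\<in>SS n s. real (card (I \<inter> A)) \<le> real t * real s / real n - g}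
        \<subseteq> {I\<in>SS n s. real (card (I \<inter> ({..<n} - A))) \<ge> real (n - t) * real s / real n + g}"
  proof safe
    fix I assume I: "I \<in> SS n s" and le: "real (card (I \<inter> A)) \<le> real t * real s / real n - g"
    have fI: "finite I" using I unfolding SS_def by (auto intro: finite_subset)
    have "I = (I \<inter> A) \<union> (I \<inter> ({..<n} - A))" using I unfolding SS_def by auto
    then have "card I = card (I \<inter> A) + card (I \<inter> ({..<n} - A))"
      using fI by (metis card_Un_disjoint finite_Int inf_commute Diff_disjoint Int_Diff inf.orderE inf_bot_right inf_left_commute Diff_Int_distrib)
    then have "real (card (I \<inter> ({..<n} - A))) = real s - real (card (I \<inter> A))" using I unfolding SS_def by simp
    also have "\<dots> \<ge> real s - (real t * real s / real n - g)" using le by simp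
    finally have "real (card (I \<inter> ({..<n} - A))) \<ge> real s - real t * real s / real n + g" by simp
    moreover have "real (n - t) * real s / real n = real s - real t * real s / real n"
      using tn n0 by (simp add: of_nat_diff field_simps)
    ultimately show "real (n - t) * real s / real n + g \<le> real (card (I \<inter> ({..<n} - A)))" by simp
  qed
  then have "card {I\<in>SS n s. real (card (I \<inter> A)) \<le> real t * real s / real n - g}
        \<le> card {I\<in>SS n s. real (card (I \<inter> ({..<n} - A))) \<ge> real (n - t) * real s / real n + g}"
    using SS_finite by (intro card_mono) auto
  also have "real \<dots> \<le> exp (- 2 * g\<^sup>2 / real s) * real (card (SS n s))"
    by (rule tail_upper[OF _ cB sn s0 g]) auto
  finally show ?thesis by simp
qed

definition prec :: "'a::linorder list \<Rightarrow> nat \<Rightarrow> nat \<Rightarrow> bool" where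
  "prec X i j \<longleftrightarrow> X ! i < X ! j \<or> (X ! i = X ! j \<and> i < j)"

definition rk :: "'a::linorder list \<Rightarrow> nat \<Rightarrow> nat" where
  "rk X j = card {i. i < length X \<and> prec X i j}"

definition At :: "'a::linorder list \<Rightarrow> nat \<Rightarrow> nat set" where
  "At X t = {j. j < length X \<and> rk X j < t}"

lemma rk_less_prec:
  assumes "j < length X" "prec X j j'"
  shows "rk X j < rk X j'"
proof -
  have "{i. i < length X \<and> prec X i j} \<subset> {i. i < length X \<and> prec X i j'}"
  proof
    show "{i. i < length X \<and> prec X i j} \<subseteq> {i. i < length X \<and> prec X i j'}"
      using assms(2) unfolding prec_def by auto
    have "j \<in> {i. i < length X \<and> prec X i j'}" "j \<notin> {i. i < length X \<and> prec X i j}"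
      using assms unfolding prec_def by auto
    then show "{i. i < length X \<and> prec X i j} \<noteq> {i. i < length X \<and> prec X i j'}" by blast
  qed
  then show ?thesis unfolding rk_def by (intro psubset_card_mono) auto
qed

lemma rk_mono:
  assumes "j < length X" "X ! j < X ! j'"
  shows "rk X j < rk X j'"
  using rk_less_prec[of j X j'] assms unfolding prec_def by auto

lemma rk_lt:
  assumes "j < length X"
  shows "rk X j < length X"
proof -
  have "{i. i < length X \<and> prec X i j} \<subseteq> {..<length X} - {j}" unfolding prec_def by auto
  then have "rk X j \<le> card ({..<length X} - {j})" unfolding rk_def by (intro card_mono) auto
  also have "\<dots> = length X - 1" using assms by simp
  finally show ?thesis using assms by simp
qed

lemma rk_inj: "inj_on (rk X) {..<length X}"
proof (rule inj_onI)
  fix i j assume ij: "i \<in> {..<length X}" "j \<in> {..<length X}" "rk X i = rk X j"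
  show "i = j"
  proof (rule ccontr)
    assume "i \<noteq> j"
    then have "prec X i j \<or> prec X j i" unfolding prec_def
      by (metis linorder_neqE_nat linorder_neqE)
    then show False using rk_less_prec[of i X j] rk_less_prec[of j X i] ij by auto
  qed
qed

lemma rk_image: "rk X ` {..<length X} = {..<length X}"
proof -
  have "rk X ` {..<length X} \<subseteq> {..<length X}" using rk_lt by auto
  moreover have "card (rk X ` {..<length X}) = card {..<length X}"
    using rk_inj[of X] by (simp add: card_image)
  ultimately show ?thesis by (intro card_subset_eq) auto
qed

lemma At_sub: "At X t \<subseteq> {..<length X}" unfolding At_def by auto

lemma At_mono: "t \<le> t' \<Longrightarrow> At X t \<subseteq> At X t'" unfolding At_def by auto

lemma card_At:
  assumes "t \<le> length X"
  shows "card (At X t) = t"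
proof -
  have "rk X ` At X t = {..<t}"
  proof
    show "rk X ` At X t \<subseteq> {..<t}" unfolding At_def by auto
    show "{..<t} \<subseteq> rk X ` At X t"
    proof
      fix r assume "r \<in> {..<t}"
      then have "r \<in> rk X ` {..<length X}" using assms rk_image[of X] by auto
      then obtain j where "j < length X" "r = rk X j" by auto
      then show "r \<in> rk X ` At X t" using \<open>r \<in> {..<t}\<close> unfolding At_def by auto
    qed
  qed
  moreover have "inj_on (rk X) (At X t)" using rk_inj by (rule inj_on_subset) (auto simp: At_def)
  ultimately show ?thesis by (metis card_image card_lessThan)
qed

lemma At_down:
  assumes "j \<in> At X t" "j' < length X" "X ! j' < X ! j"
  shows "j' \<in> At X t"
  using assms rk_mono[of j' X j] unfolding At_def by auto

lemma At_all: "At X (length X) = {..<length X}"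
  using rk_lt unfolding At_def by auto

lemma At_zero: "At X 0 = {}" unfolding At_def by auto

lemma sample_card_SS:
  assumes "I \<in> SS n s"
  shows "finite I" "card I = s" "I \<subseteq> {..<n}"
  using assms unfolding SS_def by (auto intro: finite_subset)

lemma count_sorted_sample:
  assumes "finite I"
  shows "card {j\<in>I. P (X ! j)} = length (filter P (sorted_sample X I))"
proof -
  have "length (filter P (sorted_sample X I)) = length (filter P (map (\<lambda>j. X ! j) (sorted_list_of_set I)))"
    unfolding sorted_sample_def
    by (metis mset_filter mset_sort size_mset)
  also have "\<dots> = length (filter (\<lambda>j. P (X ! j)) (sorted_list_of_set I))"
    by (simp add: filter_map comp_def)
  also have "\<dots> = card ({j. P (X ! j)} \<inter> I)"
    using assms by (simp add: distinct_length_filter)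
  finally show ?thesis by (simp add: Collect_conj_eq Int_commute)
qed

lemma length_sorted_sample:
  assumes "finite I" shows "length (sorted_sample X I) = card I"
  unfolding sorted_sample_def using assms by simp

lemma sorted_sorted_sample: "sorted (sorted_sample X I)"
  unfolding sorted_sample_def by simp

lemma sorted_count_lt:
  assumes "sorted ys" "m < length ys"
  shows "length (filter (\<lambda>x. x < ys ! m) ys) \<le> m"
proof -
  have "{i. i < length ys \<and> ys ! i < ys ! m} \<subseteq> {..<m}"
  proof
    fix i assume i: "i \<in> {i. i < length ys \<and> ys ! i < ys ! m}"
    show "i \<in> {..<m}"
    proof (rule ccontr)
      assume "i \<notin> {..<m}"
      then have "ys ! m \<le> ys ! i" using assms i by (intro sorted_nth_mono) auto
      then show False using i by auto
    qed
  qed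
  then have "card {i. i < length ys \<and> ys ! i < ys ! m} \<le> m"
    by (metis card_lessThan card_mono finite_lessThan)
  then show ?thesis by (simp add: length_filter_conv_card)
qed

lemma sorted_count_le:
  assumes "sorted ys" "m < length ys"
  shows "length (filter (\<lambda>x. x \<le> ys ! m) ys) \<ge> Suc m"
proof -
  have "{..<Suc m} \<subseteq> {i. i < length ys \<and> ys ! i \<le> ys ! m}"
    using assms by (auto intro: sorted_nth_mono)
  then have "Suc m \<le> card {i. i < length ys \<and> ys ! i \<le> ys ! m}"
    by (metis card_lessThan card_mono finite_Collect_conjI finite_lessThan lessThan_def)
  then show ?thesis by (simp add: length_filter_conv_card)
qed

lemma sample_below:
  assumes I: "finite I" "card I = s" and i: "1 \<le> i" "i \<le> s"
  shows "card {j\<in>I. X ! j < sorted_sample X I ! (i - 1)} < i"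
    and "card {j\<in>I. X ! j \<le> sorted_sample X I ! (i - 1)} \<ge> i"
proof -
  have m: "i - 1 < length (sorted_sample X I)" using I i length_sorted_sample[OF I(1), of X] by simp
  show "card {j\<in>I. X ! j < sorted_sample X I ! (i - 1)} < i"
    using sorted_count_lt[OF sorted_sorted_sample m] count_sorted_sample[OF I(1), of "\<lambda>x. x < sorted_sample X I ! (i - 1)" X] i
    by simp
  show "card {j\<in>I. X ! j \<le> sorted_sample X I ! (i - 1)} \<ge> i"
    using sorted_count_le[OF sorted_sorted_sample m] count_sorted_sample[OF I(1), of "\<lambda>x. x \<le> sorted_sample X I ! (i - 1)" X] i
    by simp
qed

lemma below_gen:
  assumes I: "I \<subseteq> {..<length X}" "finite I"
    and H: "card (I \<inter> At X t) \<ge> i" and C: "card {j\<in>I. X ! j < w} < i"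
  shows "\<exists>j0\<in>I \<inter> At X t. w \<le> X ! j0"
    and "{j. j < length X \<and> X ! j < w} \<subseteq> At X t"
proof -
  show ex: "\<exists>j0\<in>I \<inter> At X t. w \<le> X ! j0"
  proof (rule ccontr)
    assume "\<not> ?thesis"
    then have "I \<inter> At X t \<subseteq> {j\<in>I. X ! j < w}" by (auto simp: not_le)
    then have "card (I \<inter> At X t) \<le> card {j\<in>I. X ! j < w}" using I by (intro card_mono) auto
    then show False using H C by simp
  qed
  then obtain j0 where j0: "j0 \<in> I \<inter> At X t" "w \<le> X ! j0" by blast
  show "{j. j < length X \<and> X ! j < w} \<subseteq> At X t"
  proof
    fix j assume "j \<in> {j. j < length X \<and> X ! j < w}"
    then show "j \<in> At X t" using j0 At_down[of j0 X t j] by auto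
  qed
qed

lemma above_gen:
  assumes I: "I \<subseteq> {..<length X}" "finite I"
    and H: "card (I \<inter> At X t) < i" and C: "card {j\<in>I. X ! j \<le> w} \<ge> i"
  shows "\<exists>j1\<in>I - At X t. X ! j1 \<le> w"
    and "{j. j < length X \<and> w < X ! j} \<inter> At X t = {}"
proof -
  show ex: "\<exists>j1\<in>I - At X t. X ! j1 \<le> w"
  proof (rule ccontr)
    assume "\<not> ?thesis"
    then have "{j\<in>I. X ! j \<le> w} \<subseteq> I \<inter> At X t" by auto
    then have "card {j\<in>I. X ! j \<le> w} \<le> card (I \<inter> At X t)" using I by (intro card_mono) auto
    then show False using H C by simp
  qed
  then obtain j1 where j1: "j1 \<in> I - At X t" "X ! j1 \<le> w" by blast
  show "{j. j < length X \<and> w < X ! j} \<inter> At X t = {}"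
  proof (rule ccontr)
    assume "\<not> ?thesis"
    then obtain j where j: "j \<in> At X t" "w < X ! j" by auto
    have "j1 < length X" using j1 I by auto
    moreover have "X ! j1 < X ! j" using j1 j by (meson le_less_trans)
    ultimately have "j1 \<in> At X t" using j At_down[of j X t j1] by auto
    then show False using j1 by auto
  qed
qed

locale sel =
  fixes X :: "'a::linorder list" and n k s :: nat and g D \<gamma> :: real
    and R :: "'a list \<Rightarrow> nat \<Rightarrow> nat"
  assumes lenX: "length X = n" and k1: "1 \<le> k" and kn: "k \<le> n"
    and s1: "1 \<le> s" and sn: "s < n" and g0: "g > 0" and Ddef: "D = g * real n / real s"
    and \<gamma>0: "\<gamma> > 0"
    and Rb: "\<And>xs i. 1 \<le> i \<Longrightarrow> i \<le> length xs \<Longrightarrow> real (R xs i) \<le> \<gamma> * real (length xs)"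
begin

abbreviation "iu \<equiv> i_u n k s g"
abbreviation "iv \<equiv> i_v n k s g"
abbreviation "H I t \<equiv> card (I \<inter> At X t)"

lemma n0: "n > 0" using sn by simp
lemma D0: "D > 0" using Ddef g0 s1 n0 by simp
lemma gD: "g = D * real s / real n" using Ddef s1 n0 by simp

lemma iu_ge: "1 \<le> iu" unfolding i_u_def by simp
lemma iv_ge: "1 \<le> iv"
proof -
  have "real k * real s / real n > 0" using k1 s1 n0 by simp
  then have "\<lceil>real k * real s / real n + g\<rceil> \<ge> 1" using g0 by (simp add: one_le_ceiling)
  then have "1 \<le> nat \<lceil>real k * real s / real n + g\<rceil>" by (simp add: le_nat_iff)
  then show ?thesis unfolding i_v_def using s1 by simp
qed
lemma iv_le: "iv \<le> s" unfolding i_v_def by simp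
lemma iu_le: "iu \<le> s"
proof -
  have "real k * real s / real n \<le> real s" using kn n0 by (simp add: field_simps mult_right_mono)
  then have "real k * real s / real n - g \<le> real s" using g0 by simp
  then have "\<lceil>real k * real s / real n - g\<rceil> \<le> int s" by (simp add: ceiling_le_iff)
  then show ?thesis unfolding i_u_def using s1 by simp
qed

lemma iu_real: "real iu \<ge> real k * real s / real n - g"
proof -
  have "real iu = real_of_int (max \<lceil>real k * real s / real n - g\<rceil> 1)"
    unfolding i_u_def by simp
  also have "\<dots> \<ge> real_of_int \<lceil>real k * real s / real n - g\<rceil>" by simp
  moreover have "real k * real s / real n - g \<le> real_of_int \<lceil>real k * real s / real n - g\<rceil>"
    by (rule le_of_int_ceiling)
  ultimately show ?thesis by linarith
qed

lemma H_ge_iu: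
  assumes "real h \<ge> real k * real s / real n - g" "h \<ge> 1"
  shows "h \<ge> iu"
proof -
  have "\<lceil>real k * real s / real n - g\<rceil> \<le> int h" using assms(1) by (simp add: ceiling_le_iff)
  then show ?thesis unfolding i_u_def using assms(2) by simp
qed

lemma H_ge_iv:
  assumes "real h \<ge> real k * real s / real n + g"
  shows "h \<ge> iv"
proof -
  have "\<lceil>real k * real s / real n + g\<rceil> \<le> int h" using assms(1) by (simp add: ceiling_le_iff)
  then show ?thesis unfolding i_v_def by simp
qed

lemma H_lt_iv:
  assumes "real h < real k * real s / real n + g" "h < s"
  shows "h < iv"
proof -
  have "int h < \<lceil>real k * real s / real n + g\<rceil>" using assms(1) by (simp add: less_ceiling_iff)
  then show ?thesis unfolding i_v_def using assms(2) by simp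
qed

definition "T1 = min n (nat \<lceil>real k + 2 * D\<rceil>)"
definition "T2 = nat \<lfloor>real k - 2 * D\<rfloor>"
definition "T3 = max k (nat \<lfloor>D\<rfloor> + 1)"
definition "T4 = min (k - 1) (nat \<lfloor>real n - D\<rfloor>)"

lemma T1_le: "T1 \<le> n" unfolding T1_def by simp
lemma T1_real: "real T1 < real k + 2 * D + 1"
proof -
  have "real T1 \<le> real (nat \<lceil>real k + 2 * D\<rceil>)" unfolding T1_def by simp
  also have "\<dots> = real_of_int \<lceil>real k + 2 * D\<rceil>" using D0 by simp
  also have "\<dots> < real k + 2 * D + 1" using ceiling_correct[of "real k + 2 * D"] by linarith
  finally show ?thesis .
qed
lemma T1_ge_k: "k \<le> T1"
proof -
  have "real k \<le> real_of_int \<lceil>real k + 2 * D\<rceil>" using D0 by (meson le_of_int_ceiling le_add_same_cancel1 less_imp_le mult_pos_pos zero_less_numeral order_trans)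
  then have "k \<le> nat \<lceil>real k + 2 * D\<rceil>" by linarith
  then show ?thesis unfolding T1_def using kn by simp
qed
lemma T2_le_k: "T2 \<le> k"
proof -
  have "\<lfloor>real k - 2 * D\<rfloor> \<le> int k" using D0 by (simp add: floor_le_iff)
  then show ?thesis unfolding T2_def by simp
qed
lemma T2_le_T1: "T2 \<le> T1" using T2_le_k T1_ge_k by simp
lemma T2_real: "real T2 > real k - 2 * D - 1"
proof -
  have "real_of_int \<lfloor>real k - 2 * D\<rfloor> > real k - 2 * D - 1" by linarith
  moreover have "real T2 \<ge> real_of_int \<lfloor>real k - 2 * D\<rfloor>" unfolding T2_def by simp
  ultimately show ?thesis by linarith
qed
lemma T2_le_n: "T2 \<le> n" using T2_le_k kn by simp
lemma T3_le: assumes "D < real n / 2" shows "T3 \<le> n"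
proof -
  have "real_of_int \<lfloor>D\<rfloor> \<le> D" by simp
  then have "real (nat \<lfloor>D\<rfloor>) \<le> D" using D0 by simp
  then have "real (nat \<lfloor>D\<rfloor>) + 1 \<le> real n" using assms n0 sn s1 by linarith
  then show ?thesis unfolding T3_def using kn by simp
qed
lemma T3_gt: "real T3 > D"
proof -
  have "real (nat \<lfloor>D\<rfloor>) + 1 > D" using D0 by linarith
  then show ?thesis unfolding T3_def by (simp add: max_def)
qed
lemma T3_alt: "T3 \<noteq> k \<Longrightarrow> real T3 \<le> D + 1"
proof -
  assume "T3 \<noteq> k"
  then have "T3 = nat \<lfloor>D\<rfloor> + 1" unfolding T3_def by (simp add: max_def split: if_splits)
  moreover have "real (nat \<lfloor>D\<rfloor>) \<le> D" using D0 by linarith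
  ultimately show ?thesis by simp
qed
lemma T4_le: "T4 \<le> n" unfolding T4_def using kn by simp
lemma T4_real: "real T4 \<le> real n - D" if "D < real n"
proof -
  have "real (nat \<lfloor>real n - D\<rfloor>) \<le> real n - D" using that by linarith
  then show ?thesis unfolding T4_def by (simp add: min_def)
qed
lemma T4_alt: "T4 \<noteq> k - 1 \<Longrightarrow> D < real n \<Longrightarrow> real T4 > real n - D - 1"
proof -
  assume "T4 \<noteq> k - 1" "D < real n"
  then have "T4 = nat \<lfloor>real n - D\<rfloor>" unfolding T4_def by (simp add: min_def split: if_splits)
  moreover have "real (nat \<lfloor>real n - D\<rfloor>) > real n - D - 1" using \<open>D < real n\<close> by linarith
  ultimately show ?thesis by simp
qed

lemma H_le_s: "I \<in> SS n s \<Longrightarrow> H I t \<le> s"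
  using sample_card_SS[of I n s] by (metis card_mono inf_le1)

lemma G1:
  assumes I: "I \<in> SS n s" and ng: "\<not> real (H I T1) \<le> real T1 * real s / real n - g"
  shows "H I T1 \<ge> iv"
proof (cases "T1 = n")
  case True
  have "I \<inter> At X n = I" using At_all[of X] lenX sample_card_SS[OF I] by auto
  then show ?thesis using True sample_card_SS[OF I] iv_le by simp
next
  case False
  then have "T1 = nat \<lceil>real k + 2 * D\<rceil>" unfolding T1_def by (simp add: min_def split: if_splits)
  then have "real T1 \<ge> real k + 2 * D" by (metis le_of_int_ceiling of_nat_nat order_trans le_nat_iff nat_le_iff of_int_of_nat_eq of_nat_0_le_iff ceiling_le_iff le_cases)
  then have "real T1 * real s / real n \<ge> (real k + 2 * D) * real s / real n"
    using n0 by (intro divide_right_mono mult_right_mono) auto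
  also have "(real k + 2 * D) * real s / real n = real k * real s / real n + 2 * g"
    using gD n0 by (simp add: field_simps)
  finally show ?thesis using ng by (intro H_ge_iv) linarith
qed

lemma G2:
  assumes I: "I \<in> SS n s" and ng: "\<not> real (H I T2) \<ge> real T2 * real s / real n + g"
  shows "H I T2 < iu"
proof (cases "T2 = 0")
  case True
  then show ?thesis using iu_ge At_zero[of X] by simp
next
  case False
  then have "real T2 \<le> real k - 2 * D" unfolding T2_def by linarith
  then have "real T2 * real s / real n \<le> (real k - 2 * D) * real s / real n"
    using n0 by (intro divide_right_mono mult_right_mono) auto
  also have "(real k - 2 * D) * real s / real n = real k * real s / real n - 2 * g"
    using gD n0 by (simp add: field_simps)
  finally have "real (H I T2) < real k * real s / real n - g" using ng by linarith
  then show ?thesis using iu_real by linarith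
qed

lemma G3:
  assumes I: "I \<in> SS n s" and ng: "\<not> real (H I T3) \<le> real T3 * real s / real n - g"
  shows "H I T3 \<ge> iu"
proof (rule H_ge_iu)
  have "real T3 * real s / real n \<ge> real k * real s / real n"
    using n0 by (intro divide_right_mono mult_right_mono) (auto simp: T3_def)
  then show "real (H I T3) \<ge> real k * real s / real n - g" using ng by linarith
  have "real T3 * real s / real n > D * real s / real n"
    using n0 s1 T3_gt by (intro divide_strict_right_mono mult_strict_right_mono) auto
  then have "real (H I T3) > 0" using ng gD by linarith
  then show "H I T3 \<ge> 1" by simp
qed

lemma G4:
  assumes I: "I \<in> SS n s" and ng: "\<not> real (H I T4) \<ge> real T4 * real s / real n + g"
    and Dn: "D < real n"
  shows "H I T4 < iv"
proof (rule H_lt_iv)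
  have "T4 \<le> k - 1" unfolding T4_def by simp
  then have "real T4 \<le> real (k - 1)" by simp
  also have "real (k - 1) = real k - 1" using k1 by (simp add: of_nat_diff)
  finally have "real T4 \<le> real k - 1" .
  then have "real T4 * real s / real n \<le> (real k - 1) * real s / real n"
    using n0 by (intro divide_right_mono mult_right_mono) auto
  also have "\<dots> < real k * real s / real n" using n0 s1 by (simp add: field_simps)
  finally show "real (H I T4) < real k * real s / real n + g" using ng by linarith
  have "real T4 * real s / real n \<le> (real n - D) * real s / real n"
    using n0 T4_real[OF Dn] by (intro divide_right_mono mult_right_mono) auto
  also have "\<dots> = real s - g" using gD n0 by (simp add: field_simps)
  finally have "real (H I T4) < real s" using ng by linarith
  then show "H I T4 < s" by simp
qed

definition "u I = pivot_u X I k g s"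
definition "v I = pivot_v X I k g s"

lemma u_cnt:
  assumes I: "I \<in> SS n s"
  shows "card {j\<in>I. X ! j < u I} < iu" "card {j\<in>I. X ! j \<le> u I} \<ge> iu"
  using sample_below[OF sample_card_SS(1,2)[OF I] iu_ge iu_le, of X]
  unfolding u_def pivot_u_def lenX by auto

lemma v_cnt:
  assumes I: "I \<in> SS n s"
  shows "card {j\<in>I. X ! j < v I} < iv" "card {j\<in>I. X ! j \<le> v I} \<ge> iv"
  using sample_below[OF sample_card_SS(1,2)[OF I] iv_ge iv_le, of X]
  unfolding v_def pivot_v_def lenX by auto

lemma I_sub: "I \<in> SS n s \<Longrightarrow> I \<subseteq> {..<length X}" using sample_card_SS(3)[of I n s] lenX by simp

lemma step2_le:
  assumes I: "I \<in> SS n s"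
  shows "real (step2_cost R X I k g s) \<le> 2 * \<gamma> * real s"
proof -
  have len: "length (sample_list X I) = s"
    unfolding sample_list_def using sample_card_SS[OF I] by simp
  have "real (R (sample_list X I) iu) \<le> \<gamma> * real s" using Rb[of iu "sample_list X I"] len iu_ge iu_le by simp
  moreover have "real (R (sample_list X I) iv) \<le> \<gamma> * real s" using Rb[of iv "sample_list X I"] len iv_ge iv_le by simp
  ultimately show ?thesis unfolding step2_cost_def lenX by simp
qed

definition "Ev I = card {j. j < n \<and> j \<notin> I \<and> X ! j < v I}"
definition "Eu I = card {j. j < n \<and> j \<notin> I \<and> u I < X ! j}"

lemma step3_eq:
  "step3_cost X I k g s = (n - s) + (if u I < v I then (if 2 * k < n then Ev I else Eu I) else 0)"
  unfolding step3_cost_def Ev_def Eu_def u_def v_def lenX Let_def by simp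

lemma Ev_le: "Ev I \<le> n - s" if I: "I \<in> SS n s"
proof -
  have "{j. j < n \<and> j \<notin> I \<and> X ! j < v I} \<subseteq> {..<n} - I" by auto
  then have "Ev I \<le> card ({..<n} - I)" unfolding Ev_def by (intro card_mono) auto
  also have "\<dots> = n - s" using sample_card_SS[OF I] by (simp add: card_Diff_subset)
  finally show ?thesis .
qed

lemma Eu_le: "Eu I \<le> n - s" if I: "I \<in> SS n s"
proof -
  have "{j. j < n \<and> j \<notin> I \<and> u I < X ! j} \<subseteq> {..<n} - I" by auto
  then have "Eu I \<le> card ({..<n} - I)" unfolding Eu_def by (intro card_mono) auto
  also have "\<dots> = n - s" using sample_card_SS[OF I] by (simp add: card_Diff_subset)
  finally show ?thesis .
qed

lemma Ev_good:
  assumes I: "I \<in> SS n s" and ng: "\<not> real (H I T1) \<le> real T1 * real s / real n - g"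
  shows "real (Ev I) < real k + 2 * D"
proof -
  have h: "H I T1 \<ge> iv" by (rule G1[OF I ng])
  have sub: "{j. j < length X \<and> X ! j < v I} \<subseteq> At X T1"
    by (rule below_gen(2)[OF I_sub[OF I] sample_card_SS(1)[OF I] h v_cnt(1)[OF I]])
  have "{j. j < n \<and> j \<notin> I \<and> X ! j < v I} \<subseteq> At X T1 - I" using sub lenX by auto
  then have "Ev I \<le> card (At X T1 - I)" unfolding Ev_def by (intro card_mono) (auto intro: finite_subset[OF At_sub])
  also have "card (At X T1 - I) = T1 - H I T1"
    using card_Diff_subset_Int[of "At X T1" I] card_At[of T1 X] T1_le lenX
    by (metis Diff_Diff_Int Int_commute card_Diff_subset_Int finite_Int finite_subset At_sub finite_lessThan Diff_subset inf.cobounded1 card_Diff_subset)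
  finally have "Ev I \<le> T1 - 1" using h iv_ge by linarith
  then have "real (Ev I) \<le> real T1 - 1" using T1_ge_k k1 by linarith
  then show ?thesis using T1_real by linarith
qed

lemma Eu_good:
  assumes I: "I \<in> SS n s" and ng: "\<not> real (H I T2) \<ge> real T2 * real s / real n + g"
  shows "real (Eu I) < real n - real k + 2 * D"
proof -
  have h: "H I T2 < iu" by (rule G2[OF I ng])
  have dis: "{j. j < length X \<and> u I < X ! j} \<inter> At X T2 = {}"
    by (rule above_gen(2)[OF I_sub[OF I] sample_card_SS(1)[OF I] h u_cnt(2)[OF I]])
  define E where "E = {j. j < n \<and> j \<notin> I \<and> u I < X ! j}"
  have fI: "finite I" using sample_card_SS[OF I] by simp
  have "E \<union> (I - At X T2) \<subseteq> {..<n} - At X T2" using dis lenX I_sub[OF I] unfolding E_def by auto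
  then have "card (E \<union> (I - At X T2)) \<le> card ({..<n} - At X T2)" by (intro card_mono) auto
  also have "card ({..<n} - At X T2) = n - T2"
    using card_At[of T2 X] T2_le_n lenX At_sub[of X T2] by (simp add: card_Diff_subset finite_subset)
  also have "card (E \<union> (I - At X T2)) = card E + card (I - At X T2)"
    using fI unfolding E_def by (intro card_Un_disjoint) auto
  also have "card (I - At X T2) = s - H I T2"
    using fI sample_card_SS[OF I] by (simp add: card_Diff_subset_Int Diff_Int_distrib Int_commute card_Diff_subset)
  finally have "card E + (s - H I T2) \<le> n - T2" .
  moreover have "s - H I T2 \<ge> 1" using h iu_le by simp
  ultimately have "card E + 1 \<le> n - T2" by linarith
  then have "real (card E) + 1 \<le> real n - real T2" using T2_le_n by (simp add: of_nat_diff)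
  then have "real (Eu I) \<le> real n - real T2 - 1" unfolding Eu_def E_def[symmetric] by linarith
  then show ?thesis using T2_real by linarith
qed

lemma len_filter_split:
  "length (filter (\<lambda>x. x < b \<or> x \<le> a) xs) = length (filter (\<lambda>x. x \<le> a) xs) + length (filter (\<lambda>x. a < x \<and> x < b) xs)"
  for a b :: "'a"
  by (induction xs) auto

lemma len_filter_card: "length (filter P X) = card {j. j < n \<and> P (X ! j)}"
  using length_filter_conv_card[of P X] lenX by simp

definition "nL I = length (filter (\<lambda>x. x < u I) X)"
definition "nLU I = length (filter (\<lambda>x. x \<le> u I) X)"
definition "nLUM I = length (filter (\<lambda>x. x < v I \<or> x \<le> u I) X)"
definition "nR I = length (filter (\<lambda>x. v I < x) X)"
definition "nM I = length (filter (\<lambda>x. u I < x \<and> x < v I) X)"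
definition "C0 I \<longleftrightarrow> (nL I < k \<and> k \<le> nLU I) \<or> (nLUM I < k \<and> k \<le> n - nR I)"
definition "sel4 I = (if C0 I then 0 else if k \<le> nL I then nL I else if n - nR I < k then nR I else nM I)"

lemma step4_sel: "real (step4_cost R X I k g s) \<le> \<gamma> * real (sel4 I)"
proof -
  have eq: "step4_cost R X I k g s = (if C0 I then 0 else if k \<le> nL I then R (filter (\<lambda>x. x < u I) X) k
     else if n - nR I < k then R (filter (\<lambda>x. v I < x) X) (k - (n - nR I))
     else R (filter (\<lambda>x. u I < x \<and> x < v I) X) (k - nLU I))"
    unfolding step4_cost_def Let_def C0_def nL_def nLU_def nLUM_def nR_def u_def v_def lenX by simp
  have nRn: "nR I \<le> n" unfolding nR_def using lenX by (metis length_filter_le)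
  have split: "nLUM I = nLU I + nM I" unfolding nLUM_def nLU_def nM_def by (rule len_filter_split)
  show ?thesis
  proof (cases "C0 I")
    case True then show ?thesis unfolding eq sel4_def by simp
  next
    case nC0: False
    show ?thesis
    proof (cases "k \<le> nL I")
      case True
      then show ?thesis unfolding eq sel4_def using nC0 Rb[of k "filter (\<lambda>x. x < u I) X"] k1
        by (simp add: nL_def)
    next
      case nL: False
      show ?thesis
      proof (cases "n - nR I < k")
        case True
        have "1 \<le> k - (n - nR I)" "k - (n - nR I) \<le> length (filter (\<lambda>x. v I < x) X)"
          using True kn nRn by (auto simp: nR_def)
        then show ?thesis unfolding eq sel4_def using nC0 nL True Rb[of "k - (n - nR I)" "filter (\<lambda>x. v I < x) X"]
          by (simp add: nR_def)
      next
        case nR: False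
        have "nLU I < k" using nC0 nL unfolding C0_def by auto
        moreover have "k \<le> nLUM I" using nC0 nR unfolding C0_def by auto
        ultimately have "1 \<le> k - nLU I" "k - nLU I \<le> length (filter (\<lambda>x. u I < x \<and> x < v I) X)"
          using split by (auto simp: nM_def)
        then show ?thesis unfolding eq sel4_def using nC0 nL nR Rb[of "k - nLU I" "filter (\<lambda>x. u I < x \<and> x < v I) X"]
          by (simp add: nM_def)
      qed
    qed
  qed
qed

lemma sel_le_n: "sel4 I \<le> n"
  unfolding sel4_def nL_def nR_def nM_def using lenX by (auto simp del: length_filter_le intro: order_trans[OF length_filter_le])

lemma sel4_good:
  assumes I: "I \<in> SS n s" and Dn: "D < real n / 2"
    and n1: "\<not> real (H I T1) \<le> real T1 * real s / real n - g"
    and n2: "\<not> real (H I T2) \<ge> real T2 * real s / real n + g"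
    and n3: "\<not> real (H I T3) \<le> real T3 * real s / real n - g"
    and n4: "\<not> real (H I T4) \<ge> real T4 * real s / real n + g"
  shows "real (sel4 I) \<le> 4 * D"
proof -
  have Isub: "I \<subseteq> {..<length X}" and fI: "finite I" using I_sub[OF I] sample_card_SS[OF I] by auto
  have fin: "finite (At X t)" for t using At_sub[of X t] finite_subset by blast
  show ?thesis
  proof (cases "C0 I")
    case True then show ?thesis unfolding sel4_def using D0 by simp
  next
    case nC0: False
    show ?thesis
    proof (cases "k \<le> nL I")
      case True
      have h: "H I T3 \<ge> iu" by (rule G3[OF I n3])
      obtain j0 where j0: "j0 \<in> I \<inter> At X T3" "u I \<le> X ! j0"
        using below_gen(1)[OF Isub fI h u_cnt(1)[OF I]] by blast
      have sub: "{j. j < length X \<and> X ! j < u I} \<subseteq> At X T3"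
        by (rule below_gen(2)[OF Isub fI h u_cnt(1)[OF I]])
      have "{j. j < n \<and> X ! j < u I} \<subseteq> At X T3 - {j0}" using sub j0 lenX by auto
      then have "nL I \<le> card (At X T3 - {j0})" unfolding nL_def len_filter_card using fin by (intro card_mono) auto
      also have "\<dots> = T3 - 1" using j0 card_At[OF T3_le[OF Dn, folded lenX]] by (simp add: lenX)
      finally have nLb: "nL I \<le> T3 - 1" .
      then have "T3 \<noteq> k" using True k1 by linarith
      then have "real T3 \<le> D + 1" by (rule T3_alt)
      moreover have "T3 \<ge> 1" using T3_gt D0 by simp
      then have "nL I + 1 \<le> T3" using nLb by linarith
      then have "real (nL I) + 1 \<le> real T3" by linarith
      ultimately have "real (nL I) \<le> D" by linarith
      then show ?thesis unfolding sel4_def using nC0 True D0 by simp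
    next
      case nL: False
      show ?thesis
      proof (cases "n - nR I < k")
        case True
        have h: "H I T4 < iv" using G4[OF I n4] Dn n0 by simp
        obtain j1 where j1: "j1 \<in> I - At X T4" "X ! j1 \<le> v I"
          using above_gen(1)[OF Isub fI h v_cnt(2)[OF I]] by blast
        have dis: "{j. j < length X \<and> v I < X ! j} \<inter> At X T4 = {}"
          by (rule above_gen(2)[OF Isub fI h v_cnt(2)[OF I]])
        have "{j. j < n \<and> v I < X ! j} \<subseteq> ({..<n} - At X T4) - {j1}" using dis j1 lenX by auto
        then have "nR I \<le> card (({..<n} - At X T4) - {j1})" unfolding nR_def len_filter_card by (intro card_mono) auto
        also have "\<dots> = n - T4 - 1"
        proof -
          have "card ({..<n} - At X T4) = n - T4"
            using card_At[of T4 X] T4_le lenX At_sub[of X T4] by (simp add: card_Diff_subset finite_subset)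
          moreover have "j1 \<in> {..<n} - At X T4" using j1 Isub lenX by auto
          ultimately show ?thesis by simp
        qed
        finally have nRb: "nR I \<le> n - T4 - 1" .
        have "nR I \<le> n" unfolding nR_def using lenX by (metis length_filter_le)
        have T4k: "T4 \<le> k - 1" unfolding T4_def by simp
        have nRb': "nR I + 1 + T4 \<le> n" using nRb T4k k1 kn by arith
        then have "T4 \<noteq> k - 1" using True k1 by arith
        then have "real T4 > real n - D - 1" using T4_alt Dn n0 by simp
        moreover have "real (nR I) + 1 + real T4 \<le> real n" using nRb' by linarith
        ultimately have "real (nR I) < D" by linarith
        then show ?thesis unfolding sel4_def using nC0 nL True D0 by simp
      next
        case nR: False
        show ?thesis
        proof (cases "nM I = 0")
          case True then show ?thesis unfolding sel4_def using nC0 nL nR D0 by simp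
        next
          case False
          define M where "M = {j. j < n \<and> u I < X ! j \<and> X ! j < v I}"
          have nMc: "nM I = card M" unfolding nM_def M_def len_filter_card by simp
          then obtain x where x: "x \<in> M" using False by fastforce
          then have uv: "u I < v I" unfolding M_def by auto
          have h1: "H I T1 \<ge> iv" by (rule G1[OF I n1])
          have h2: "H I T2 < iu" by (rule G2[OF I n2])
          obtain j0 where j0: "j0 \<in> I \<inter> At X T1" "v I \<le> X ! j0"
            using below_gen(1)[OF Isub fI h1 v_cnt(1)[OF I]] by blast
          have sub1: "{j. j < length X \<and> X ! j < v I} \<subseteq> At X T1"
            by (rule below_gen(2)[OF Isub fI h1 v_cnt(1)[OF I]])
          obtain j1 where j1: "j1 \<in> I - At X T2" "X ! j1 \<le> u I"
            using above_gen(1)[OF Isub fI h2 u_cnt(2)[OF I]] by blast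
          have dis2: "{j. j < length X \<and> u I < X ! j} \<inter> At X T2 = {}"
            by (rule above_gen(2)[OF Isub fI h2 u_cnt(2)[OF I]])
          have j0n: "j0 < length X" and j1n: "j1 < length X" using j0 j1 Isub by auto
          have lt: "X ! j1 < X ! j0" using j0 j1 uv by (meson le_less_trans less_le_trans)
          have j1A: "j1 \<in> At X T1" using At_down[of j0 X T1 j1] j0 j1n lt by auto
          have j0A: "j0 \<notin> At X T2" using dis2 j0n j0 uv by (auto dest: less_le_trans)
          have "M \<union> {j0, j1} \<subseteq> At X T1 - At X T2"
            using sub1 dis2 j0 j1 j1A j0A lenX unfolding M_def by auto
          then have "card (M \<union> {j0, j1}) \<le> card (At X T1 - At X T2)" using fin by (intro card_mono) auto
          also have "\<dots> = T1 - T2"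
            using card_At[of T1 X] card_At[of T2 X] T1_le T2_le_n lenX At_mono[OF T2_le_T1, of X] fin
            by (simp add: card_Diff_subset)
          also have "card (M \<union> {j0, j1}) = card M + 2"
          proof -
            have "j0 \<notin> M" "j1 \<notin> M" using j0 j1 unfolding M_def by auto
            moreover have "j0 \<noteq> j1" using lt by auto
            moreover have "finite M" unfolding M_def by simp
            ultimately show ?thesis by (simp add: card_insert_if)
          qed
          finally have "card M + 2 \<le> T1 - T2" .
          then have "real (card M) + 2 \<le> real T1 - real T2" using T2_le_T1 by (simp add: of_nat_diff)
          then have "real (nM I) < 4 * D" using nMc T1_real T2_real by linarith
          then show ?thesis unfolding sel4_def using nC0 nL nR by simp
        qed
      qed
    qed
  qed
qed

definition "b1 I \<longleftrightarrow> real (H I T1) \<le> real T1 * real s / real n - g"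
definition "b2 I \<longleftrightarrow> real (H I T2) \<ge> real T2 * real s / real n + g"
definition "b3 I \<longleftrightarrow> real (H I T3) \<le> real T3 * real s / real n - g"
definition "b4 I \<longleftrightarrow> real (H I T4) \<ge> real T4 * real s / real n + g"

definition "G0 = 2 * \<gamma> * real s + real (n - s) + real (min k (n - k)) + (4 * \<gamma> + 2) * D"

lemma cost_split:
  "real (step2_cost R X I k g s + step3_cost X I k g s + step4_cost R X I k g s)
     \<le> real (step2_cost R X I k g s) + real (n - s) + real (if 2 * k < n then Ev I else Eu I) + \<gamma> * real (sel4 I)"
  using step4_sel[of I] unfolding step3_eq by auto

lemma ext_bound:
  assumes I: "I \<in> SS n s"
  shows "real (if 2 * k < n then Ev I else Eu I) \<le> real (min k (n - k)) + 2 * D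
           + real n * of_bool (if 2 * k < n then b1 I else b2 I)"
proof (cases "2 * k < n")
  case True
  then have mn: "real (min k (n - k)) = real k" by simp
  show ?thesis
  proof (cases "b1 I")
    case True
    then show ?thesis using Ev_le[OF I] \<open>2 * k < n\<close> D0 by simp
  next
    case False
    then show ?thesis using Ev_good[OF I] \<open>2 * k < n\<close> mn unfolding b1_def by simp
  qed
next
  case False
  then have mn: "real (min k (n - k)) = real n - real k" using kn by (simp add: of_nat_diff)
  show ?thesis
  proof (cases "b2 I")
    case True
    then show ?thesis using Eu_le[OF I] \<open>\<not> 2 * k < n\<close> D0 by simp
  next
    case False
    then show ?thesis using Eu_good[OF I] \<open>\<not> 2 * k < n\<close> mn unfolding b2_def by simp
  qed
qed

lemma sel_bound:
  assumes I: "I \<in> SS n s" and Dn: "D < real n / 2"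
  shows "\<gamma> * real (sel4 I) \<le> 4 * \<gamma> * D + \<gamma> * real n * (of_bool (b1 I) + of_bool (b2 I) + of_bool (b3 I) + of_bool (b4 I))"
proof (cases "b1 I \<or> b2 I \<or> b3 I \<or> b4 I")
  case True
  have "\<gamma> * real (sel4 I) \<le> \<gamma> * real n" using sel_le_n[of I] \<gamma>0 by simp
  also have "\<dots> \<le> \<gamma> * real n * (of_bool (b1 I) + of_bool (b2 I) + of_bool (b3 I) + of_bool (b4 I))"
    using True \<gamma>0 by (auto simp: of_bool_def)
  finally have "\<gamma> * real (sel4 I) \<le> \<gamma> * real n * (of_bool (b1 I) + of_bool (b2 I) + of_bool (b3 I) + of_bool (b4 I))" .
  moreover have "0 \<le> 4 * \<gamma> * D" using \<gamma>0 D0 by simp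
  ultimately show ?thesis by linarith
next
  case False
  then have "real (sel4 I) \<le> 4 * D" using sel4_good[OF I Dn] unfolding b1_def b2_def b3_def b4_def by auto
  then show ?thesis using False \<gamma>0 by (simp add: mult_left_mono)
qed

lemma cost_bound:
  assumes I: "I \<in> SS n s" and Dn: "D < real n / 2"
  shows "real (step2_cost R X I k g s + step3_cost X I k g s + step4_cost R X I k g s)
     \<le> G0 + real n * of_bool (if 2 * k < n then b1 I else b2 I)
        + \<gamma> * real n * (of_bool (b1 I) + of_bool (b2 I) + of_bool (b3 I) + of_bool (b4 I))"
  using cost_split[of I] step2_le[OF I] ext_bound[OF I] sel_bound[OF I Dn] unfolding G0_def
  by (simp add: algebra_simps)

lemma cost_bound_triv:
  assumes I: "I \<in> SS n s" and Dn: "\<not> D < real n / 2"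
  shows "real (step2_cost R X I k g s + step3_cost X I k g s + step4_cost R X I k g s) \<le> G0"
proof -
  have "real (if 2 * k < n then Ev I else Eu I) \<le> real n" using Ev_le[OF I] Eu_le[OF I] by auto
  also have "\<dots> \<le> real (min k (n - k)) + 2 * D" using Dn by simp
  finally have e: "real (if 2 * k < n then Ev I else Eu I) \<le> real (min k (n - k)) + 2 * D" .
  have "\<gamma> * real (sel4 I) \<le> \<gamma> * real n" using sel_le_n[of I] \<gamma>0 by simp
  also have "\<dots> \<le> \<gamma> * (4 * D)" using Dn \<gamma>0 D0 by (intro mult_left_mono) auto
  finally have "\<gamma> * real (sel4 I) \<le> 4 * \<gamma> * D" by simp
  then show ?thesis using cost_split[of I] step2_le[OF I] e unfolding G0_def by (simp add: algebra_simps)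
qed

end

context sel begin

abbreviation "q \<equiv> exp (- 2 * g\<^sup>2 / real s)"
abbreviation "SSn \<equiv> SS n s"

lemma Bcard_lower:
  assumes "t \<le> n"
  shows "real (card {I\<in>SSn. real (H I t) \<le> real t * real s / real n - g}) \<le> q * real (card SSn)"
  using tail_lower[of "At X t" n t s g] At_sub[of X t] card_At[of t X] assms lenX sn s1 g0 by simp

lemma Bcard_upper:
  assumes "t \<le> n"
  shows "real (card {I\<in>SSn. real (H I t) \<ge> real t * real s / real n + g}) \<le> q * real (card SSn)"
  using tail_upper[of "At X t" n t s g] At_sub[of X t] card_At[of t X] assms lenX sn s1 g0 by simp

lemma B_cards:
  assumes Dn: "D < real n / 2"
  shows "real (card (SSn \<inter> {I. b1 I})) \<le> q * real (card SSn)"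
    "real (card (SSn \<inter> {I. b2 I})) \<le> q * real (card SSn)"
    "real (card (SSn \<inter> {I. b3 I})) \<le> q * real (card SSn)"
    "real (card (SSn \<inter> {I. b4 I})) \<le> q * real (card SSn)"
proof -
  have e: "SSn \<inter> {I. P I} = {I\<in>SSn. P I}" for P by auto
  show "real (card (SSn \<inter> {I. b1 I})) \<le> q * real (card SSn)"
    unfolding e b1_def by (rule Bcard_lower[OF T1_le])
  show "real (card (SSn \<inter> {I. b2 I})) \<le> q * real (card SSn)"
    unfolding e b2_def by (rule Bcard_upper[OF T2_le_n])
  show "real (card (SSn \<inter> {I. b3 I})) \<le> q * real (card SSn)"
    unfolding e b3_def by (rule Bcard_lower[OF T3_le[OF Dn]])
  show "real (card (SSn \<inter> {I. b4 I})) \<le> q * real (card SSn)"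
    unfolding e b4_def by (rule Bcard_upper[OF T4_le])
qed

abbreviation "cost I \<equiv> step2_cost R X I k g s + step3_cost X I k g s + step4_cost R X I k g s"

lemma prob_loc:
  "real (card (SSn \<inter> {I. real (cost I) \<le> G0})) \<ge> (1 - 4 * q) * real (card SSn)"
proof (cases "D < real n / 2")
  case False
  then have "SSn \<inter> {I. real (cost I) \<le> G0} = SSn" using cost_bound_triv by auto
  moreover have "(1 - 4 * q) * real (card SSn) \<le> real (card SSn)"
    by (simp add: algebra_simps)
  ultimately show ?thesis by simp
next
  case Dn: True
  have fS: "finite SSn" by (rule SS_finite)
  have sub: "SSn - {I. real (cost I) \<le> G0} \<subseteq> (SSn \<inter> {I. b1 I}) \<union> (SSn \<inter> {I. b2 I}) \<union> (SSn \<inter> {I. b3 I}) \<union> (SSn \<inter> {I. b4 I})"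
  proof
    fix I assume I: "I \<in> SSn - {I. real (cost I) \<le> G0}"
    then have "\<not> real (cost I) \<le> G0" by simp
    moreover have "real (cost I) \<le> G0" if nb: "\<not> b1 I" "\<not> b2 I" "\<not> b3 I" "\<not> b4 I"
    proof -
      have IS: "I \<in> SSn" using I by blast
      have cb: "real (cost I) \<le> G0 + real n * of_bool (if 2 * k < n then b1 I else b2 I)
        + \<gamma> * real n * (of_bool (b1 I) + of_bool (b2 I) + of_bool (b3 I) + of_bool (b4 I))"
        by (rule cost_bound[OF IS Dn])
      have z1: "(of_bool (if 2 * k < n then b1 I else b2 I) :: real) = 0" using nb by simp
      have z2: "(of_bool (b1 I) + of_bool (b2 I) + of_bool (b3 I) + of_bool (b4 I) :: real) = 0" using nb by simp
      show ?thesis using cb unfolding z1 z2 by simp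
    qed
    ultimately show "I \<in> (SSn \<inter> {I. b1 I}) \<union> (SSn \<inter> {I. b2 I}) \<union> (SSn \<inter> {I. b3 I}) \<union> (SSn \<inter> {I. b4 I})"
      using I by blast
  qed
  have "card (SSn - {I. real (cost I) \<le> G0}) \<le> card ((SSn \<inter> {I. b1 I}) \<union> (SSn \<inter> {I. b2 I}) \<union> (SSn \<inter> {I. b3 I}) \<union> (SSn \<inter> {I. b4 I}))"
    using fS by (intro card_mono[OF _ sub]) auto
  also have "\<dots> \<le> card (SSn \<inter> {I. b1 I}) + card (SSn \<inter> {I. b2 I}) + card (SSn \<inter> {I. b3 I}) + card (SSn \<inter> {I. b4 I})"
    using card_Un_le[of "(SSn \<inter> {I. b1 I}) \<union> (SSn \<inter> {I. b2 I}) \<union> (SSn \<inter> {I. b3 I})" "SSn \<inter> {I. b4 I}"]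
      card_Un_le[of "(SSn \<inter> {I. b1 I}) \<union> (SSn \<inter> {I. b2 I})" "SSn \<inter> {I. b3 I}"]
      card_Un_le[of "SSn \<inter> {I. b1 I}" "SSn \<inter> {I. b2 I}"] by linarith
  finally have "real (card (SSn - {I. real (cost I) \<le> G0})) \<le> 4 * q * real (card SSn)"
    using B_cards[OF Dn] by linarith
  moreover have "card SSn = card (SSn \<inter> {I. real (cost I) \<le> G0}) + card (SSn - {I. real (cost I) \<le> G0})"
    using fS card_Int_Diff[of SSn "{I. real (cost I) \<le> G0}"] by (simp add: Diff_eq)
  ultimately show ?thesis by (simp add: algebra_simps)
qed

lemma exp_loc:
  "(\<Sum>I\<in>SSn. real (cost I)) \<le> real (card SSn) * (G0 + (4 * \<gamma> + 1) * real n * q)"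
proof (cases "D < real n / 2")
  case False
  have "(\<Sum>I\<in>SSn. real (cost I)) \<le> (\<Sum>I\<in>SSn. G0)" using cost_bound_triv[OF _ False] by (intro sum_mono) auto
  also have "\<dots> \<le> real (card SSn) * (G0 + (4 * \<gamma> + 1) * real n * q)"
    using \<gamma>0 by (simp add: mult_left_mono)
  finally show ?thesis .
next
  case Dn: True
  have fS: "finite SSn" by (rule SS_finite)
  have "(\<Sum>I\<in>SSn. real (cost I)) \<le> (\<Sum>I\<in>SSn. G0 + real n * of_bool (if 2 * k < n then b1 I else b2 I)
        + \<gamma> * real n * (of_bool (b1 I) + of_bool (b2 I) + of_bool (b3 I) + of_bool (b4 I)))"
    using cost_bound[OF _ Dn] by (intro sum_mono) auto
  also have "\<dots> = real (card SSn) * G0 + real n * (\<Sum>I\<in>SSn. of_bool (if 2 * k < n then b1 I else b2 I))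
        + \<gamma> * real n * ((\<Sum>I\<in>SSn. of_bool (b1 I)) + (\<Sum>I\<in>SSn. of_bool (b2 I)) + (\<Sum>I\<in>SSn. of_bool (b3 I)) + (\<Sum>I\<in>SSn. of_bool (b4 I)))"
    by (simp add: sum.distrib flip: sum_distrib_left)
  finally have S1: "(\<Sum>I\<in>SSn. real (cost I)) \<le> real (card SSn) * G0 + real n * (\<Sum>I\<in>SSn. of_bool (if 2 * k < n then b1 I else b2 I))
        + \<gamma> * real n * ((\<Sum>I\<in>SSn. of_bool (b1 I)) + (\<Sum>I\<in>SSn. of_bool (b2 I)) + (\<Sum>I\<in>SSn. of_bool (b3 I)) + (\<Sum>I\<in>SSn. of_bool (b4 I)))" .
  have A: "(\<Sum>I\<in>SSn. of_bool (if 2 * k < n then b1 I else b2 I) :: real) \<le> q * real (card SSn)"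
    using B_cards[OF Dn] fS by (cases "2 * k < n") auto
  have B: "(\<Sum>I\<in>SSn. of_bool (b1 I)) + (\<Sum>I\<in>SSn. of_bool (b2 I)) + (\<Sum>I\<in>SSn. of_bool (b3 I)) + (\<Sum>I\<in>SSn. of_bool (b4 I)) \<le> 4 * (q * real (card SSn))"
    using B_cards[OF Dn] fS by simp
  have A': "real n * (\<Sum>I\<in>SSn. of_bool (if 2 * k < n then b1 I else b2 I)) \<le> real n * (q * real (card SSn))"
    using A by (intro mult_left_mono) auto
  have B': "\<gamma> * real n * ((\<Sum>I\<in>SSn. of_bool (b1 I)) + (\<Sum>I\<in>SSn. of_bool (b2 I)) + (\<Sum>I\<in>SSn. of_bool (b3 I)) + (\<Sum>I\<in>SSn. of_bool (b4 I))) \<le> \<gamma> * real n * (4 * (q * real (card SSn)))"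
    using B \<gamma>0 by (intro mult_left_mono) auto
  have "real (card SSn) * (G0 + (4 * \<gamma> + 1) * real n * q) = real (card SSn) * G0 + real n * (q * real (card SSn)) + \<gamma> * real n * (4 * (q * real (card SSn)))"
    by (simp add: algebra_simps)
  then show ?thesis using S1 A' B' by linarith
qed

end

lemma ln_n_ge1: "n \<ge> 3 \<Longrightarrow> ln (real n) \<ge> 1"
proof -
  assume n: "n \<ge> 3"
  have "exp 1 \<le> real n" using exp_le n by linarith
  then show ?thesis using n by (subst ln_ge_iff) auto
qed

lemma fsel_pos: "n \<ge> 3 \<Longrightarrow> fsel n > 0"
  unfolding fsel_def using ln_n_ge1[of n] by simp

lemma fsel_cube: "n \<ge> 3 \<Longrightarrow> fsel n ^ 3 = real n ^ 2 * ln (real n)"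
proof -
  assume n: "n \<ge> 3"
  have l: "ln (real n) > 0" using ln_n_ge1[OF n] by simp
  have "fsel n ^ 3 = (real n powr (2/3)) ^ 3 * (ln (real n) powr (1/3)) ^ 3"
    unfolding fsel_def by (simp add: power_mult_distrib)
  also have "(real n powr (2/3)) ^ 3 = real n powr 2" using n by (subst powr_power) auto
  also have "(ln (real n) powr (1/3)) ^ 3 = ln (real n) powr 1" using l by (subst powr_power) auto
  also have "real n powr 2 = real n ^ 2" using n by (simp add: powr_numeral)
  also have "ln (real n) powr 1 = ln (real n)" using l by simp
  finally show ?thesis .
qed

lemma D_bound:
  fixes \<alpha> \<beta> \<theta> :: real and n s :: nat
  assumes "\<alpha> > 0" "\<beta> > 0" "n \<ge> 3" "real s \<ge> \<alpha> * fsel n" "1 < \<theta> * real s" "\<theta> * real s \<le> real n" "s > 0"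
  shows "sqrt (\<beta> * real s * ln (\<theta> * real s)) * real n / real s \<le> sqrt (\<beta> / \<alpha>) * fsel n"
proof (rule power2_le_imp_le)
  define L where "L = ln (\<theta> * real s)"
  define f where "f = fsel n"
  have f0: "f > 0" unfolding f_def using fsel_pos assms by simp
  have L0: "L > 0" unfolding L_def using assms by simp
  have Ln: "L \<le> ln (real n)" unfolding L_def using assms by (subst ln_le_cancel_iff) auto
  have f3: "f ^ 3 = real n ^ 2 * ln (real n)" unfolding f_def using fsel_cube assms by simp
  have "(sqrt (\<beta> * real s * L) * real n / real s)\<^sup>2 = \<beta> * real s * L * real n ^ 2 / real s ^ 2"
    using assms L0 by (simp add: power_divide power_mult_distrib)
  also have "\<dots> = \<beta> * L * real n ^ 2 / real s" using assms by (simp add: power2_eq_square field_simps)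
  also have "\<dots> \<le> \<beta> * ln (real n) * real n ^ 2 / (\<alpha> * f)"
    using assms f0 L0 Ln unfolding f_def[symmetric] by (intro frac_le mult_right_mono mult_left_mono) auto
  also have "\<dots> = (\<beta> / \<alpha>) * (f ^ 3 / f)" unfolding f3 using assms f0 by (simp add: field_simps)
  also have "\<dots> = (\<beta> / \<alpha>) * f\<^sup>2" using f0 by (simp add: power2_eq_square power3_eq_cube)
  also have "\<dots> = (sqrt (\<beta> / \<alpha>) * f)\<^sup>2" using assms by (simp add: power_mult_distrib)
  finally show "(sqrt (\<beta> * real s * ln (\<theta> * real s)) * real n / real s)\<^sup>2 \<le> (sqrt (\<beta> / \<alpha>) * fsel n)\<^sup>2"
    unfolding L_def f_def .
  show "0 \<le> sqrt (\<beta> / \<alpha>) * fsel n" using assms fsel_pos[of n] by simp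
qed

lemma q_bound:
  fixes \<alpha> \<beta> \<theta> :: real and n s :: nat
  assumes "\<alpha> > 0" "\<beta> > 0" "\<theta> > 0" "n \<ge> 3" "real s \<ge> \<alpha> * fsel n" "1 < \<theta> * real s" "s > 0"
  shows "exp (- 2 * (sqrt (\<beta> * real s * ln (\<theta> * real s)))\<^sup>2 / real s)
     \<le> (\<alpha> * \<theta>) powr (-2 * \<beta>) * real n powr (-4 * \<beta> / 3) * ln (real n) powr (-2 * \<beta> / 3)"
proof -
  have L0: "ln (\<theta> * real s) > 0" using assms by simp
  have f0: "fsel n > 0" using fsel_pos assms by simp
  have l0: "ln (real n) > 0" using ln_n_ge1 assms by force
  have "exp (- 2 * (sqrt (\<beta> * real s * ln (\<theta> * real s)))\<^sup>2 / real s) = exp (- 2 * \<beta> * ln (\<theta> * real s))"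
    using L0 assms by simp
  also have "\<dots> = (\<theta> * real s) powr (-2 * \<beta>)" using assms by (simp add: powr_def)
  also have "\<dots> \<le> (\<alpha> * \<theta> * fsel n) powr (-2 * \<beta>)"
    using assms f0 by (intro powr_mono2') (auto simp: mult.commute mult.left_commute)
  also have "(\<alpha> * \<theta> * fsel n) powr (-2 * \<beta>) = (\<alpha> * \<theta>) powr (-2 * \<beta>) * fsel n powr (-2 * \<beta>)"
    using assms f0 by (simp add: powr_mult)
  also have "fsel n powr (-2 * \<beta>) = real n powr (-4 * \<beta> / 3) * ln (real n) powr (-2 * \<beta> / 3)"
    unfolding fsel_def using l0 by (simp add: powr_mult powr_powr)
  finally show ?thesis by (simp add: mult.assoc)
qed

lemma nQ_bound:
  fixes \<beta> :: real and n :: nat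
  assumes "\<beta> \<ge> 1/4" "n \<ge> 3"
  shows "real n * (real n powr (-4 * \<beta> / 3) * ln (real n) powr (-2 * \<beta> / 3)) \<le> fsel n"
proof -
  have n1: "real n \<ge> 1" using assms by simp
  have l1: "ln (real n) \<ge> 1" using ln_n_ge1 assms by simp
  have "real n * real n powr (-4 * \<beta> / 3) = real n powr (1 + (-4 * \<beta> / 3))"
    using n1 powr_add[of "real n" 1 "-4 * \<beta> / 3"] by simp
  also have "\<dots> \<le> real n powr (2/3)" using n1 assms by (intro powr_mono) auto
  finally have a: "real n * real n powr (-4 * \<beta> / 3) \<le> real n powr (2/3)" .
  have b: "ln (real n) powr (-2 * \<beta> / 3) \<le> ln (real n) powr (1/3)" using l1 assms by (intro powr_mono) auto
  have "real n * (real n powr (-4 * \<beta> / 3) * ln (real n) powr (-2 * \<beta> / 3))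
        = (real n * real n powr (-4 * \<beta> / 3)) * ln (real n) powr (-2 * \<beta> / 3)" by simp
  also have "\<dots> \<le> real n powr (2/3) * ln (real n) powr (1/3)"
    using a b by (intro mult_mono) auto
  finally show ?thesis unfolding fsel_def .
qed

theorem theorem5p1:
  fixes \<alpha> \<beta> \<theta> \<gamma>P :: real and n k :: nat and X :: "'a::linorder list"
    and R_cost :: "'a list \<Rightarrow> nat \<Rightarrow> nat"
  assumes "\<alpha> > 0" "\<beta> > 0" "\<theta> > 0" "\<gamma>P > 2"
    and "length X = n" "1 \<le> k" "k \<le> n"
    and R_bound: "\<And>xs i. 1 \<le> i \<Longrightarrow> i \<le> length xs \<Longrightarrow> real (R_cost xs i) \<le> \<gamma>P * real (length xs)"
    and "s_size \<alpha> n < n - 1"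
    and "1 < \<theta> * real (s_size \<alpha> n)" "\<theta> * real (s_size \<alpha> n) \<le> real n"
  shows "measure_pmf.prob (sample_pmf n (s_size \<alpha> n))
           {I. real (c_nk R_cost \<alpha> \<beta> \<theta> X k I) \<le> real n + real (min k (n - k)) + gamma_hat \<gamma>P \<alpha> \<beta> n * fsel n}
         \<ge> 1 - 4 * (\<alpha> * \<theta>) powr (-2 * \<beta>) * real n powr (-4 * \<beta> / 3) * ln (real n) powr (-2 * \<beta> / 3)
       \<and> (\<beta> \<ge> 1/4 \<longrightarrow>
         measure_pmf.expectation (sample_pmf n (s_size \<alpha> n)) (\<lambda>I. real (c_nk R_cost \<alpha> \<beta> \<theta> X k I))
         \<le> real n + real (min k (n - k)) + (gamma_hat \<gamma>P \<alpha> \<beta> n + (4 * \<gamma>P + 2) * (\<alpha> * \<theta>) powr (-2 * \<beta>)) * fsel n)"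
proof -
  note a = assms
  define s where "s = s_size \<alpha> n"
  define g where "g = g_gap \<beta> \<theta> s"
  define D where "D = g * real n / real s"
  define f where "f = fsel n"
  define Q where "Q = (\<alpha> * \<theta>) powr (-2 * \<beta>) * real n powr (-4 * \<beta> / 3) * ln (real n) powr (-2 * \<beta> / 3)"
  define B where "B = real n + real (min k (n - k)) + gamma_hat \<gamma>P \<alpha> \<beta> n * fsel n"
  have s0: "s > 0" using a(10) unfolding s_def by (cases "s_size \<alpha> n") auto
  have sn1: "s < n - 1" using a(9) unfolding s_def .
  have n3: "n \<ge> 3" using s0 sn1 by linarith
  have f0: "f > 0" unfolding f_def using fsel_pos[OF n3] .
  have s_eq: "s = nat \<lceil>\<alpha> * f\<rceil>" using sn1 unfolding s_def s_size_def f_def by (simp add: min_def split: if_splits)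
  have s_ge: "real s \<ge> \<alpha> * f" unfolding s_eq by linarith
  have s_le: "real s \<le> \<alpha> * f + 1"
  proof -
    have "real_of_int \<lceil>\<alpha> * f\<rceil> < \<alpha> * f + 1" using ceiling_correct[of "\<alpha> * f"] by linarith
    moreover have "real s = real_of_int \<lceil>\<alpha> * f\<rceil>" unfolding s_eq using a(1) f0 by simp
    ultimately show ?thesis by simp
  qed
  have ts1: "1 < \<theta> * real s" and tsn: "\<theta> * real s \<le> real n" using a(10,11) unfolding s_def by auto
  have L0: "ln (\<theta> * real s) > 0" using ts1 by simp
  have g_eq: "g = sqrt (\<beta> * real s * ln (\<theta> * real s))" unfolding g_def g_gap_def ..
  have g0: "g > 0" unfolding g_eq using a(2) s0 L0 by simp
  interpret L: sel X n k s g D \<gamma>P R_cost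
    using a(5,6,7) s0 sn1 g0 a(4) R_bound unfolding D_def by unfold_locales auto
  have cnk: "c_nk R_cost \<alpha> \<beta> \<theta> X k I = L.cost I" for I
    unfolding c_nk_def Let_def a(5) s_def[symmetric] g_def[symmetric] ..
  have pmf: "sample_pmf n (s_size \<alpha> n) = pmf_of_set (SS n s)"
    unfolding sample_pmf_def SS_def s_def ..
  have SSne: "SS n s \<noteq> {}" using SS_nonempty[of s n] sn1 by simp
  have cS: "real (card (SS n s)) > 0" using SSne SS_finite card_gt_0_iff by auto
  have DB: "D \<le> sqrt (\<beta> / \<alpha>) * f"
    unfolding D_def g_eq f_def using D_bound[OF a(1,2) n3 s_ge[unfolded f_def] ts1 tsn s0] .
  have G0B: "L.G0 \<le> B"
  proof -
    have "real (n - s) = real n - real s" using sn1 by (simp add: of_nat_diff)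
    moreover have "(2 * \<gamma>P - 1) * real s \<le> (2 * \<gamma>P - 1) * (\<alpha> * f + 1)" using s_le a(4) by (intro mult_left_mono) auto
    moreover have "(4 * \<gamma>P + 2) * D \<le> (4 * \<gamma>P + 2) * (sqrt (\<beta> / \<alpha>) * f)" using DB a(4) by (intro mult_left_mono) auto
    moreover have "gamma_hat \<gamma>P \<alpha> \<beta> n * fsel n = (4 * \<gamma>P + 2) * (sqrt (\<beta> / \<alpha>) * f) + (2 * \<gamma>P - 1) * (\<alpha> * f + 1)"
      unfolding gamma_hat_def f_def[symmetric] using f0 by (simp add: field_simps)
    ultimately show ?thesis unfolding L.G0_def B_def by (simp add: algebra_simps)
  qed
  have qQ: "L.q \<le> Q"
    unfolding Q_def g_eq using q_bound[OF a(1,2,3) n3 s_ge[unfolded f_def] ts1 s0] .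
  have part1: "measure_pmf.prob (sample_pmf n (s_size \<alpha> n)) {I. real (c_nk R_cost \<alpha> \<beta> \<theta> X k I) \<le> B} \<ge> 1 - 4 * Q"
  proof -
    have "measure_pmf.prob (sample_pmf n (s_size \<alpha> n)) {I. real (c_nk R_cost \<alpha> \<beta> \<theta> X k I) \<le> B}
          = real (card (SS n s \<inter> {I. real (L.cost I) \<le> B})) / real (card (SS n s))"
      unfolding pmf cnk using measure_pmf_of_set[OF SSne SS_finite] by simp
    also have "\<dots> \<ge> real (card (SS n s \<inter> {I. real (L.cost I) \<le> L.G0})) / real (card (SS n s))"
      using G0B SS_finite cS by (intro divide_right_mono of_nat_mono card_mono) auto
    moreover have "real (card (SS n s \<inter> {I. real (L.cost I) \<le> L.G0})) / real (card (SS n s)) \<ge> 1 - 4 * L.q"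
      using L.prob_loc cS by (simp add: field_simps)
    moreover have "1 - 4 * L.q \<ge> 1 - 4 * Q" using qQ by simp
    ultimately show ?thesis by linarith
  qed
  have part2: "measure_pmf.expectation (sample_pmf n (s_size \<alpha> n)) (\<lambda>I. real (c_nk R_cost \<alpha> \<beta> \<theta> X k I))
         \<le> B + (4 * \<gamma>P + 2) * (\<alpha> * \<theta>) powr (-2 * \<beta>) * fsel n" if b4: "\<beta> \<ge> 1/4"
  proof -
    have "measure_pmf.expectation (sample_pmf n (s_size \<alpha> n)) (\<lambda>I. real (c_nk R_cost \<alpha> \<beta> \<theta> X k I))
          = (\<Sum>I\<in>SS n s. real (L.cost I)) / real (card (SS n s))"
      unfolding pmf cnk using integral_pmf_of_set[OF SSne SS_finite] by simp
    also have "\<dots> \<le> L.G0 + (4 * \<gamma>P + 1) * real n * L.q"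
      using L.exp_loc cS by (simp add: field_simps)
    also have "\<dots> \<le> B + (4 * \<gamma>P + 1) * (real n * Q)"
    proof -
      have "real n * L.q \<le> real n * Q" using qQ by (intro mult_left_mono) auto
      then have "(4 * \<gamma>P + 1) * (real n * L.q) \<le> (4 * \<gamma>P + 1) * (real n * Q)"
        by (rule mult_left_mono) (use a(4) in auto)
      then show ?thesis using G0B by (simp add: mult.assoc)
    qed
    also have "real n * Q \<le> (\<alpha> * \<theta>) powr (-2 * \<beta>) * fsel n"
    proof -
      have "real n * Q = (\<alpha> * \<theta>) powr (-2 * \<beta>) * (real n * (real n powr (-4 * \<beta> / 3) * ln (real n) powr (-2 * \<beta> / 3)))"
        unfolding Q_def by (simp add: algebra_simps)
      also have "\<dots> \<le> (\<alpha> * \<theta>) powr (-2 * \<beta>) * fsel n"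
        using nQ_bound[OF b4 n3] by (intro mult_left_mono) auto
      finally show ?thesis .
    qed
    then have "B + (4 * \<gamma>P + 1) * (real n * Q) \<le> B + (4 * \<gamma>P + 1) * ((\<alpha> * \<theta>) powr (-2 * \<beta>) * fsel n)"
      using a(4) by (intro add_left_mono mult_left_mono) auto
    also have "\<dots> \<le> B + (4 * \<gamma>P + 2) * (\<alpha> * \<theta>) powr (-2 * \<beta>) * fsel n"
      using f0 unfolding f_def by (simp add: algebra_simps)
    finally show ?thesis .
  qed
  show ?thesis
    using part1 part2 unfolding B_def Q_def by (simp add: algebra_simps)
qed

end
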